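(* Let $v,a,b,c\in\mathbb{C}$ with $a\neq0$, $b\neq0$, $v\neq 1$, $\Re(v)<3$, $\Re(c)>0$, and $\Re(vc+a+b)>0$, $\Re(vc+a-b)>0$, $\Re(vc-a+b)>0$, $\Re(vc-a-b)>0$. Put $\sigma_3=\frac v2-\frac{a}{2c}-\frac{b}{2c}$, $\sigma_4=\frac v2-\frac{a}{2c}+\frac{b}{2c}$, $\sigma_5=\frac v2+\frac{a}{2c}+\frac{b}{2c}$, $\sigma_6=\frac v2+\frac{a}{2c}-\frac{b}{2c}$, and $P=(vc-a-b)(vc+a+b)(vc-a+b)(vc+a-b)$. Assume $\frac v2\notin\mathbb{Z}_0^-$ and $1+\sigma_j\notin\mathbb{Z}_0^-$ for $j=3,4,5,6$. Then $$ {}_6F_5\!\left(\begin{matrix}v,\ 1+\frac v2,\ \sigma_3,\ \sigma_5,\ \sigma_4,\ \sigma_6\\ \frac v2,\ 1+\sigma_3,\ 1+\sigma_5,\ 1+\sigma_4,\ 1+\sigma_6\end{matrix};\,1\right) =\frac{P}{16\,v\,a\,b\,c^{2}\,\Gamma(v)}\left[\Gamma(\sigma_5)\Gamma(\sigma_3)\frac{\cos\!\big(\frac{(a+b)\pi}{2c}\big)}{\cos(\frac{v\pi}{2})}-\Gamma(\sigma_6)\Gamma(\sigma_4)\frac{\cos\!\big(\frac{(a-b)\pi}{2c}\big)}{\cos(\frac{v\pi}{2})}\right]. $$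
   Context: $\mathbb{Z}_0^-=\{0,-1,-2,\dots\}$. The Pochhammer symbol is $(\lambda)_0=1$, $(\lambda)_n=\lambda(\lambda+1)\cdots(\lambda+n-1)$ for $n\ge1$. The generalized hypergeometric series is ${}_pF_q\!\left(\begin{matrix}\alpha_1,\dots,\alpha_p\\ \beta_1,\dots,\beta_q\end{matrix};z\right)=\sum_{n=0}^\infty\frac{(\alpha_1)_n\cdots(\alpha_p)_n}{(\beta_1)_n\cdots(\beta_q)_n}\frac{z^n}{n!}$ (with no $\beta_j\in\mathbb{Z}_0^-$); when $p=q+1$ and $z=1$ it converges if $\Re(\sum\beta_j-\sum\alpha_i)>0$. $\Gamma$ is Euler's gamma function. *)

theory Defs
  imports "HOL-Analysis.Analysis"
begin

definition hyp_term :: "complex list \<Rightarrow> complex list \<Rightarrow> complex \<Rightarrow> nat \<Rightarrow> complex" where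
  "hyp_term as bs z n =
     (\<Prod>a\<leftarrow>as. pochhammer a n) / (\<Prod>b\<leftarrow>bs. pochhammer b n) * z ^ n / of_nat (fact n)"

definition hypergeom :: "complex list \<Rightarrow> complex list \<Rightarrow> complex \<Rightarrow> complex" where
  "hypergeom as bs z = (\<Sum>n. hyp_term as bs z n)"

end

theory Submission
  imports Defs "HOL-Complex_Analysis.Complex_Analysis"
begin


definition gt :: "complex \<Rightarrow> complex \<Rightarrow> complex \<Rightarrow> nat \<Rightarrow> complex" where
  "gt a b c n = pochhammer a n * pochhammer b n / (fact n * pochhammer c n)"

lemma nonpos_plus_nat: "(c::complex) \<notin> \<int>\<^sub>\<le>\<^sub>0 \<Longrightarrow> c + of_nat k \<notin> \<int>\<^sub>\<le>\<^sub>0"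
proof
  assume "c \<notin> \<int>\<^sub>\<le>\<^sub>0" "c + of_nat k \<in> \<int>\<^sub>\<le>\<^sub>0"
  then obtain m where "c + of_nat k = - of_nat m" by (auto elim: nonpos_Ints_cases')
  hence "c = - of_nat m - of_nat k" by (metis add_diff_cancel_right')
  hence "c = - of_nat (m + k)" by simp
  thus False using \<open>c \<notin> \<int>\<^sub>\<le>\<^sub>0\<close> minus_of_nat_in_nonpos_Ints[of "m+k"] by metis
qed

lemma nonpos_plus_nat_ne0: "(c::complex) \<notin> \<int>\<^sub>\<le>\<^sub>0 \<Longrightarrow> c + of_nat k \<noteq> 0"
  using nonpos_plus_nat[of c k] by auto

lemma poch_ne0: "(c::complex) \<notin> \<int>\<^sub>\<le>\<^sub>0 \<Longrightarrow> pochhammer c n \<noteq> 0"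
  by (metis pochhammer_eq_0_imp_nonpos_Int)

lemma gt_Suc:
  assumes "c \<notin> \<int>\<^sub>\<le>\<^sub>0"
  shows "gt a b c (Suc n) = gt a b c n * (a + of_nat n) * (b + of_nat n) / ((of_nat n + 1) * (c + of_nat n))"
  using poch_ne0[OF assms, of n] nonpos_plus_nat_ne0[OF assms, of n]
  by (simp add: gt_def pochhammer_Suc field_simps)

lemma poch_rGS:
  assumes "n > 0"
  shows "pochhammer z (Suc n) = rGamma_series z n * fact n * exp (z * of_real (ln (of_nat n)))"
  unfolding rGamma_series_def by (simp add: field_simps)

lemma field_aux1:
  fixes ra rb rc f Ea Eb Ec Eab N :: complex
  assumes "Eab * Ec = Ea * Eb" "rc \<noteq> 0" "f \<noteq> 0" "Ec \<noteq> 0" "N \<noteq> 0"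
  shows "(ra*f*Ea)*(rb*f*Eb)/((N * f)*(rc*f*Ec)) * rc = ra*rb*Eab/N"
proof -
  have "(ra*f*Ea)*(rb*f*Eb)/((N * f)*(rc*f*Ec)) * rc = ra*rb*(Ea*Eb)/(N*Ec)"
    using assms by (simp add: field_simps)
  also have "\<dots> = ra*rb*Eab/N" using assms(1)[symmetric] assms by (simp add: field_simps)
  finally show ?thesis .
qed

lemma gt_asym:
  assumes "n > 0" "c \<notin> \<int>\<^sub>\<le>\<^sub>0"
  shows "gt a b c (Suc n) * rGamma_series c n =
     rGamma_series a n * rGamma_series b n * exp ((a + b - c) * of_real (ln (of_nat n))) / (of_nat n + 1)"
proof -
  have e: "exp ((a + b - c) * of_real (ln (of_nat n))) * exp (c * of_real (ln (of_nat n)))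
        = exp (a * of_real (ln (of_nat n))) * exp (b * of_real (ln (of_nat n)))"
    by (simp add: exp_add[symmetric] algebra_simps)
  have sn: "of_nat n + 1 = (of_nat (Suc n)::complex)" by simp
  have rc: "rGamma_series c n \<noteq> 0"
    using poch_ne0[OF assms(2), of "Suc n"] by (simp add: rGamma_series_def)
  have "gt a b c (Suc n) * rGamma_series c n = pochhammer a (Suc n) * pochhammer b (Suc n) /
      (fact (Suc n) * pochhammer c (Suc n)) * rGamma_series c n" by (simp add: gt_def)
  also have "\<dots> = rGamma_series a n * rGamma_series b n * exp ((a + b - c) * of_real (ln (of_nat n))) / (of_nat n + 1)"
    unfolding poch_rGS[OF assms(1)] fact_Suc of_nat_mult sn
    by (rule field_aux1[OF e rc]) (simp_all del: of_nat_Suc)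
  finally show ?thesis .
qed

lemma norm_exp_ln: "n > 0 \<Longrightarrow> norm (exp (z * of_real (ln (real n)))) = real n powr (Re z)"
  by (simp add: norm_exp_eq_Re powr_def)

lemma gt_bound:
  assumes "c \<notin> \<int>\<^sub>\<le>\<^sub>0"
  shows "\<exists>C. eventually (\<lambda>n. norm (gt a b c (Suc n)) \<le> C * (real n powr (Re (a + b - c)) / (real n + 1))) sequentially"
proof -
  have rc: "rGamma c \<noteq> 0" using assms by (simp add: rGamma_eq_zero_iff)
  have l1: "(\<lambda>n. norm (rGamma_series a n * rGamma_series b n)) \<longlonglongrightarrow> norm (rGamma a * rGamma b)"
    by (intro tendsto_intros)
  have l2: "(\<lambda>n. norm (rGamma_series c n)) \<longlonglongrightarrow> norm (rGamma c)"
    by (intro tendsto_intros)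
  have e1: "eventually (\<lambda>n. norm (rGamma_series a n * rGamma_series b n) < norm (rGamma a * rGamma b) + 1) sequentially"
    using order_tendstoD(2)[OF l1] by simp
  have e2: "eventually (\<lambda>n. norm (rGamma_series c n) > norm (rGamma c) / 2) sequentially"
    using order_tendstoD(1)[OF l2, of "norm (rGamma c) / 2"] rc by simp
  define C where "C = (norm (rGamma a * rGamma b) + 1) / (norm (rGamma c) / 2)"
  have "eventually (\<lambda>n. norm (gt a b c (Suc n)) \<le> C * (real n powr (Re (a + b - c)) / (real n + 1))) sequentially"
    using e1 e2 eventually_gt_at_top[of 0]
  proof eventually_elim
    case (elim n)
    have "norm (rGamma_series c n) > 0" using elim(2) norm_ge_zero[of "rGamma c"] by linarith
    hence rcn: "rGamma_series c n \<noteq> 0" by simp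
    have geq: "gt a b c (Suc n) = rGamma_series a n * rGamma_series b n *
       exp ((a + b - c) * of_real (ln (of_nat n))) / (of_nat n + 1) / rGamma_series c n"
    proof -
      have "gt a b c (Suc n) = (gt a b c (Suc n) * rGamma_series c n) / rGamma_series c n"
        using rcn by simp
      thus ?thesis by (simp only: gt_asym[OF elim(3) assms, of a b])
    qed
    have "norm (gt a b c (Suc n)) = norm (rGamma_series a n * rGamma_series b n) *
         (real n powr (Re (a + b - c)) / (real n + 1)) / norm (rGamma_series c n)"
    proof -
      have "norm (of_nat n + 1::complex) = real n + 1"
        by (metis norm_of_nat of_nat_Suc add.commute of_real_of_nat_eq)
      moreover have "exp ((Re a + Re b - Re c) * ln (real n)) = real n powr (Re a + Re b - Re c)"
        using elim(3) by (simp add: powr_def)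
      ultimately show ?thesis using elim(3) geq by (simp add: norm_mult norm_divide norm_exp_ln)
    qed
    also have "\<dots> \<le> (norm (rGamma a * rGamma b) + 1) *
         (real n powr (Re (a + b - c)) / (real n + 1)) / (norm (rGamma c) / 2)"
      apply (intro frac_le mult_right_mono)
      using elim rc by auto
    also have "\<dots> = C * (real n powr (Re (a + b - c)) / (real n + 1))"
      using rc by (simp add: C_def field_simps)
    finally show ?case .
  qed
  thus ?thesis by blast
qed

lemma gt_summable:
  assumes "c \<notin> \<int>\<^sub>\<le>\<^sub>0" "Re (c - a - b) > 0"
  shows "summable (gt a b c)"
proof -
  obtain C where C: "eventually (\<lambda>n. norm (gt a b c (Suc n)) \<le> C * (real n powr (Re (a + b - c)) / (real n + 1))) sequentially"
    using gt_bound[OF assms(1)] by blast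
  have "summable (\<lambda>n. C * real n powr (Re (a + b - c) - 1))"
    using assms(2) by (intro summable_mult) (simp add: summable_real_powr_iff)
  moreover have "eventually (\<lambda>n. norm (gt a b c (Suc n)) \<le> C * real n powr (Re (a + b - c) - 1)) sequentially"
    using C eventually_gt_at_top[of 0]
  proof eventually_elim
    case (elim n)
    have p: "real n powr (Re (a + b - c)) / (real n + 1) > 0" using elim(2) by simp
    have "0 \<le> C * (real n powr (Re (a + b - c)) / (real n + 1))" by (rule order_trans[OF norm_ge_zero elim(1)])
    hence C0: "C \<ge> 0" using p elim(2) by (simp add: zero_le_mult_iff zero_le_divide_iff)
    have "real n powr (Re (a + b - c)) / (real n + 1) \<le> real n powr (Re (a + b - c)) / real n"
      using elim(2) by (intro divide_left_mono) auto
    also have "\<dots> = real n powr (Re (a + b - c) - 1)"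
      using elim(2) by (simp add: powr_diff)
    finally have "C * (real n powr (Re (a + b - c)) / (real n + 1)) \<le> C * real n powr (Re (a + b - c) - 1)"
      using C0 by (intro mult_left_mono) auto
    thus ?case using elim(1) by linarith
  qed
  ultimately have "summable (\<lambda>n. gt a b c (Suc n))"
    by (rule summable_comparison_test_ev[rotated])
  thus ?thesis by (simp add: summable_Suc_iff)
qed

lemma gt_lim:
  assumes "c \<notin> \<int>\<^sub>\<le>\<^sub>0" "Re (c - a - b) > 0"
  shows "(\<lambda>n. of_nat n * gt a b c n) \<longlonglongrightarrow> 0"
proof -
  obtain C where C: "eventually (\<lambda>n. norm (gt a b c (Suc n)) \<le> C * (real n powr (Re (a + b - c)) / (real n + 1))) sequentially"
    using gt_bound[OF assms(1)] by blast
  have "(\<lambda>n. of_nat (Suc n) * gt a b c (Suc n)) \<longlonglongrightarrow> 0"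
  proof (rule Lim_null_comparison)
    show "eventually (\<lambda>n. norm (of_nat (Suc n) * gt a b c (Suc n)) \<le> C * real n powr (Re (a + b - c))) sequentially"
      using C
    proof eventually_elim
      case (elim n)
      have "norm (of_nat (Suc n) * gt a b c (Suc n)) = real (Suc n) * norm (gt a b c (Suc n))"
        by (simp only: norm_mult norm_of_nat)
      also have "\<dots> = (real n + 1) * norm (gt a b c (Suc n))" by simp
      also have "\<dots> \<le> (real n + 1) * (C * (real n powr (Re (a + b - c)) / (real n + 1)))"
        using elim by (intro mult_left_mono) auto
      also have "\<dots> = C * real n powr (Re (a + b - c))" by simp
      finally show ?case .
    qed
    have "(\<lambda>n. real n powr (Re (a + b - c))) \<longlonglongrightarrow> 0"
      using assms(2) by (intro tendsto_neg_powr filterlim_real_sequentially) auto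
    thus "(\<lambda>n. C * real n powr (Re (a + b - c))) \<longlonglongrightarrow> 0"
      using tendsto_mult_right_zero by blast
  qed
  thus ?thesis by (rule LIMSEQ_imp_Suc)
qed

lemma gt_shift1:
  assumes "c \<notin> \<int>\<^sub>\<le>\<^sub>0"
  shows "gt a b (c + 1) n = gt a b c n * c / (c + of_nat n)"
proof -
  have c0: "c \<noteq> 0" using assms by auto
  have "c * pochhammer (c + 1) n = pochhammer c n * (c + of_nat n)"
    by (metis pochhammer_Suc pochhammer_rec)
  hence p: "pochhammer (c + 1) n = pochhammer c n * (c + of_nat n) / c" using c0
    by (simp add: field_simps)
  show ?thesis unfolding gt_def p using poch_ne0[OF assms, of n] nonpos_plus_nat_ne0[OF assms, of n] c0
    by (simp add: field_simps)
qed

lemma of_nat_plus1_ne0: "(of_nat n + 1::complex) \<noteq> 0"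
proof -
  have "(of_nat n + 1::complex) = of_nat (Suc n)" by simp
  thus ?thesis by (simp only: of_nat_eq_0_iff)
qed

lemma aux2: fixes G a b c x :: complex assumes "c + x \<noteq> 0" "x + 1 \<noteq> 0"
  shows "- c * (1+x) * (G*(a+x)*(b+x)/((x+1)*(c+x))) - (- c * x * G) = c*(c-a-b)*G - (c-a)*(c-b)*(G*c/(c+x))"
proof -
  have "- c * (1+x) * (G*(a+x)*(b+x)/((x+1)*(c+x))) = - c * (G*(a+x)*(b+x)/(c+x))"
    using assms by (simp add: add.commute[of 1 x])
  moreover have "- c * (G*(a+x)*(b+x)/(c+x)) - (- c * x * G) = c*(c-a-b)*G - (c-a)*(c-b)*(G*c/(c+x))"
    using assms apply (simp add: divide_simps) by algebra
  ultimately show ?thesis by simp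
qed

lemma gauss_contig:
  assumes "c \<notin> \<int>\<^sub>\<le>\<^sub>0" "Re (c - a - b) > 0"
  shows "c * (c - a - b) * suminf (gt a b c) = (c - a) * (c - b) * suminf (gt a b (c + 1))"
proof -
  define u where "u n = - c * of_nat n * gt a b c n" for n
  have "u \<longlonglongrightarrow> - c * 0"
    unfolding u_def mult.assoc by (intro tendsto_mult tendsto_const gt_lim assms)
  hence tel: "(\<lambda>n. u (Suc n) - u n) sums 0"
    using telescope_sums[of u "0"] by (simp add: u_def)
  have id: "u (Suc n) - u n = c * (c - a - b) * gt a b c n - (c - a) * (c - b) * gt a b (c + 1) n" for n
  proof -
    have cn: "c + of_nat n \<noteq> 0" by (rule nonpos_plus_nat_ne0[OF assms(1)])
    have "u (Suc n) - u n = - c * (1 + of_nat n) * (gt a b c n*(a + of_nat n)*(b + of_nat n)/((of_nat n + 1)*(c + of_nat n))) - (- c * of_nat n * gt a b c n)"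
      by (simp only: u_def gt_Suc[OF assms(1)] of_nat_Suc)
    also have "\<dots> = c*(c-a-b)*gt a b c n - (c-a)*(c-b)*(gt a b c n*c/(c + of_nat n))"
      by (rule aux2) (use cn of_nat_plus1_ne0 in \<open>auto simp del: of_nat_Suc\<close>)
    finally show ?thesis unfolding gt_shift1[OF assms(1)] .
  qed
  have s1: "gt a b c sums suminf (gt a b c)" using gt_summable[OF assms] by (simp add: summable_sums)
  have s2: "gt a b (c+1) sums suminf (gt a b (c+1))"
    using gt_summable[of "c+1" a b] nonpos_plus_nat[OF assms(1), of 1] assms(2)
    by (simp add: summable_sums)
  have "(\<lambda>n. c * (c - a - b) * gt a b c n - (c - a) * (c - b) * gt a b (c + 1) n) sums
        (c * (c - a - b) * suminf (gt a b c) - (c - a) * (c - b) * suminf (gt a b (c + 1)))"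
    by (intro sums_diff sums_mult s1 s2)
  moreover from tel have "(\<lambda>n. c * (c - a - b) * gt a b c n - (c - a) * (c - b) * gt a b (c + 1) n) sums 0"
    unfolding id .
  ultimately show ?thesis using sums_unique2 by fastforce
qed


lemma Re_pos_not_nonpos: "Re (z::complex) > 0 \<Longrightarrow> z \<notin> \<int>\<^sub>\<le>\<^sub>0"
  by (auto elim!: nonpos_Ints_cases)

lemma gauss_iter:
  assumes "c \<notin> \<int>\<^sub>\<le>\<^sub>0" "Re (c - a - b) > 0"
  shows "suminf (gt a b c) = pochhammer (c - a) m * pochhammer (c - b) m /
           (pochhammer c m * pochhammer (c - a - b) m) * suminf (gt a b (c + of_nat m))"
proof (induction m)
  case 0 thus ?case by simp
next
  case (Suc m)
  define c' where "c' = c + of_nat m"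
  have c'1: "c' \<notin> \<int>\<^sub>\<le>\<^sub>0" unfolding c'_def by (rule nonpos_plus_nat[OF assms(1)])
  have c'2: "Re (c' - a - b) > 0" unfolding c'_def using assms(2) by simp
  have c'0: "c' \<noteq> 0" using c'1 by auto
  have c'3: "c' - a - b \<noteq> 0" using c'2 by auto
  have cont: "c' * (c' - a - b) * suminf (gt a b c') = (c' - a) * (c' - b) * suminf (gt a b (c' + 1))"
    by (rule gauss_contig[OF c'1 c'2])
  have S: "suminf (gt a b c') = (c' - a) * (c' - b) / (c' * (c' - a - b)) * suminf (gt a b (c' + 1))"
  proof -
    have "suminf (gt a b c') = (c' * (c' - a - b) * suminf (gt a b c')) / (c' * (c' - a - b))"
      using c'0 c'3 by simp
    also have "\<dots> = (c' - a) * (c' - b) / (c' * (c' - a - b)) * suminf (gt a b (c' + 1))"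
      unfolding cont by simp
    finally show ?thesis .
  qed
  have p1: "pochhammer c m \<noteq> 0" by (rule poch_ne0[OF assms(1)])
  have p2: "pochhammer (c - a - b) m \<noteq> 0" by (rule poch_ne0[OF Re_pos_not_nonpos[OF assms(2)]])
  have e: "c + of_nat (Suc m) = c' + 1" unfolding c'_def by simp
  show ?case unfolding Suc.IH e pochhammer_Suc
    unfolding c'_def[symmetric] S using p1 p2 c'0 c'3
    by (simp add: c'_def field_simps)
qed

lemma field_aux3:
  fixes x1 x2 x3 x4 f e1 e2 e3 e4 :: complex
  assumes "e1 * e2 = e3 * e4" "f \<noteq> 0" "e3 \<noteq> 0" "e4 \<noteq> 0" "e1 \<noteq> 0" "e2 \<noteq> 0"
  shows "(x1 * f * e1) * (x2 * f * e2) / ((x3 * f * e3) * (x4 * f * e4)) = x1 * x2 / (x3 * x4)"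
proof (cases "x3 * x4 = 0")
  case True thus ?thesis by auto
next
  case False
  hence "x3 \<noteq> 0" "x4 \<noteq> 0" by auto
  thus ?thesis using assms by (simp add: field_simps)
qed

lemma poch_ratio_lim:
  assumes "c \<notin> \<int>\<^sub>\<le>\<^sub>0" "Re (c - a - b) > 0"
  shows "(\<lambda>m. pochhammer (c - a) (Suc m) * pochhammer (c - b) (Suc m) /
           (pochhammer c (Suc m) * pochhammer (c - a - b) (Suc m)))
         \<longlonglongrightarrow> rGamma (c - a) * rGamma (c - b) / (rGamma c * rGamma (c - a - b))"
proof -
  have nz: "rGamma c * rGamma (c - a - b) \<noteq> 0"
    using assms Re_pos_not_nonpos[OF assms(2)] by (simp add: rGamma_eq_zero_iff)
  have lim: "(\<lambda>m. rGamma_series (c - a) m * rGamma_series (c - b) m / (rGamma_series c m * rGamma_series (c - a - b) m))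
         \<longlonglongrightarrow> rGamma (c - a) * rGamma (c - b) / (rGamma c * rGamma (c - a - b))"
    by (intro tendsto_intros nz)
  show ?thesis
  proof (rule Lim_transform_eventually[OF lim])
    show "eventually (\<lambda>m. rGamma_series (c - a) m * rGamma_series (c - b) m / (rGamma_series c m * rGamma_series (c - a - b) m) =
       pochhammer (c - a) (Suc m) * pochhammer (c - b) (Suc m) /
           (pochhammer c (Suc m) * pochhammer (c - a - b) (Suc m))) sequentially"
      using eventually_gt_at_top[of 0]
    proof eventually_elim
      case (elim m)
      have e: "exp ((c - a) * of_real (ln (of_nat m))) * exp ((c - b) * of_real (ln (of_nat m))) =
        exp (c * of_real (ln (of_nat m))) * exp ((c - a - b) * of_real (ln (of_nat m)))"
        by (simp add: exp_add[symmetric] algebra_simps)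
      show ?case unfolding poch_rGS[OF elim]
        by (rule field_aux3[OF e, symmetric]) auto
    qed
  qed
qed

lemma poch_nonneg0: "(x::real) \<ge> 0 \<Longrightarrow> 0 \<le> pochhammer x n"
  by (induction n) (auto simp: pochhammer_Suc intro!: mult_nonneg_nonneg add_nonneg_nonneg)

lemma norm_poch_le: "norm (pochhammer (z::complex) k) \<le> pochhammer (norm z) k"
proof (induction k)
  case 0 thus ?case by simp
next
  case (Suc k)
  have "norm (z + of_nat k) \<le> norm z + of_nat k"
    using norm_triangle_ineq[of z "of_nat k"] by simp
  hence "norm (pochhammer z k) * norm (z + of_nat k) \<le> pochhammer (norm z) k * (norm z + of_nat k)"
    using Suc poch_nonneg0[OF norm_ge_zero[of z], of k] by (intro mult_mono) auto
  thus ?case by (simp add: pochhammer_Suc norm_mult)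
qed

lemma norm_poch_ge:
  assumes "Re z \<ge> r" "r \<ge> 0"
  shows "pochhammer r k \<le> norm (pochhammer (z::complex) k)"
proof (induction k)
  case 0 thus ?case by simp
next
  case (Suc k)
  have "r + of_nat k \<le> Re (z + of_nat k)" using assms by simp
  also have "\<dots> \<le> norm (z + of_nat k)" by (rule complex_Re_le_cmod)
  finally have "pochhammer r k * (r + of_nat k) \<le> norm (pochhammer z k) * norm (z + of_nat k)"
    using Suc assms by (intro mult_mono) (auto intro: pochhammer_nonneg)
  thus ?case by (simp add: pochhammer_Suc norm_mult)
qed

lemma poch_ge1: "(x::real) \<ge> 1 \<Longrightarrow> 1 \<le> pochhammer x k"
proof (induction k)
  case 0 thus ?case by simp
next
  case (Suc k)
  have "1 * 1 \<le> pochhammer x k * (x + of_nat k)"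
    using Suc by (intro mult_mono) auto
  thus ?case by (simp add: pochhammer_Suc)
qed

lemma poch_ge_self: "(x::real) \<ge> 1 \<Longrightarrow> k \<ge> 1 \<Longrightarrow> x \<le> pochhammer x k"
proof -
  assume x: "x \<ge> 1" and k: "k \<ge> 1"
  then obtain j where j: "k = Suc j" by (cases k) auto
  have "x * 1 \<le> x * pochhammer (x + 1) j"
    using x poch_ge1[of "x+1" j] by (intro mult_left_mono) auto
  thus ?thesis unfolding j pochhammer_rec by simp
qed

lemma frac_cmp: "(b::real) > 0 \<Longrightarrow> d > 0 \<Longrightarrow> a*d \<le> c*b \<Longrightarrow> a/b \<le> c/d"
  by (simp add: divide_le_eq le_divide_eq mult.commute)

lemma M_bound:
  fixes \<alpha> \<beta> r :: real
  assumes "\<alpha> \<ge> 0" "\<beta> \<ge> 0" "r = 3*\<alpha>*\<beta> + 3*\<alpha> + 3*\<beta> + 3"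
  shows "pochhammer \<alpha> k * pochhammer \<beta> k / (fact k * pochhammer r k) \<le> 2 / ((real k + 1) * (real k + 2))"
proof (induction k)
  case 0 thus ?case by simp
next
  case (Suc k)
  define M where "M = pochhammer \<alpha> k * pochhammer \<beta> k / (fact k * pochhammer r k)"
  have "3*\<alpha>*\<beta> \<ge> 0" using assms by simp
  hence rpos: "r > 0" using assms by linarith
  have pr: "pochhammer r k > 0" using rpos by (simp add: pochhammer_pos)
  have M0: "M \<ge> 0" unfolding M_def using assms pr by (auto intro!: divide_nonneg_nonneg mult_nonneg_nonneg poch_nonneg0)
  have step: "pochhammer \<alpha> (Suc k) * pochhammer \<beta> (Suc k) / (fact (Suc k) * pochhammer r (Suc k))
     = M * ((\<alpha> + k) * (\<beta> + k) / ((k + 1) * (r + k)))"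
    unfolding M_def pochhammer_Suc fact_Suc using pr rpos by (simp add: field_simps)
  have key: "(\<alpha> + k) * (\<beta> + k) * (k + 3) \<le> (k + 1)^2 * (r + k)"
  proof -
    have "(k + 1)^2 * (r + k) - (\<alpha> + k) * (\<beta> + k) * (k + 3)
        = (r - \<alpha> - \<beta> - 1) * (real k)^2 + (2*r + 1 - \<alpha>*\<beta> - 3*\<alpha> - 3*\<beta>) * real k + (r - 3*\<alpha>*\<beta>)"
      by (simp add: power2_eq_square algebra_simps)
    also have "\<dots> \<ge> 0" using assms
      by (intro add_nonneg_nonneg mult_nonneg_nonneg) (auto simp: mult_nonneg_nonneg)
    finally show ?thesis by simp
  qed
  have q0: "(\<alpha> + k) * (\<beta> + k) / ((k + 1) * (r + k)) \<ge> 0" using assms rpos by auto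
  have "M * ((\<alpha> + k) * (\<beta> + k) / ((k + 1) * (r + k))) \<le> 2 / ((real k + 1) * (real k + 2)) * ((\<alpha> + k) * (\<beta> + k) / ((k + 1) * (r + k)))"
    using Suc q0 unfolding M_def by (intro mult_right_mono) auto
  also have "\<dots> \<le> 2 / ((real (Suc k) + 1) * (real (Suc k) + 2))"
  proof -
    define X where "X = (\<alpha> + k) * (\<beta> + k)"
    have eqL: "2 / ((real k + 1) * (real k + 2)) * ((\<alpha> + k) * (\<beta> + k) / ((k + 1) * (r + k)))
       = (2 * X) / ((real k + 1) * (real k + 2) * ((k + 1) * (r + k)))" unfolding X_def by simp
    have eqR: "2 / ((real (Suc k) + 1) * (real (Suc k) + 2)) = 2 / ((real k + 2) * (real k + 3))" by (simp add: add.commute)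
    have b: "(real k + 1) * (real k + 2) * ((k + 1) * (r + k)) > 0" using rpos by simp
    have d: "(real k + 2) * (real k + 3) > 0" by simp
    have h: "2*(real k+2)*(X*(k+3)) \<le> 2*(real k+2)*((k+1)^2*(r+k))"
      unfolding X_def by (intro mult_left_mono key) auto
    have e1: "2 * X * ((real k + 2) * (real k + 3)) = 2*(real k+2)*(X*(k+3))" by (simp add: algebra_simps)
    have e2: "2 * ((real k + 1) * (real k + 2) * ((k + 1) * (r + k))) = 2*(real k+2)*((k+1)^2*(r+k))"
      by (simp add: algebra_simps power2_eq_square)
    have "(2 * X) / ((real k + 1) * (real k + 2) * ((k + 1) * (r + k))) \<le> 2 / ((real k + 2) * (real k + 3))"
      by (rule frac_cmp[OF b d]) (use h e1 e2 in linarith)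
    thus ?thesis unfolding eqL eqR .
  qed
  finally show ?case unfolding step .
qed



lemma summable_g2: "summable (\<lambda>k. 2 / ((real k + 1) * (real k + 2)))"
proof -
  have s: "summable (\<lambda>n::nat. 2 * (1 / (real n + 1)^2))"
    using summable_mult[OF sums_summable[OF inverse_squares_sums], of 2] by (simp add: add.commute)
  show ?thesis
proof (rule summable_comparison_test[OF _ s])
  show "\<exists>N. \<forall>n\<ge>N. norm (2 / ((real n + 1) * (real n + 2))) \<le> 2 * (1 / (real n + 1)\<^sup>2)"
  proof (intro exI allI impI)
    fix n :: nat
    have "2 / ((real n + 1) * (real n + 2)) \<le> 2 / ((real n + 1) * (real n + 1))"
      by (intro divide_left_mono mult_mono) auto
    thus "norm (2 / ((real n + 1) * (real n + 2))) \<le> 2 * (1 / (real n + 1)\<^sup>2)"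
      by (simp add: power2_eq_square)
  qed
qed
qed

lemma norm_gt: "norm (gt a b c k) = norm (pochhammer a k) * norm (pochhammer b k) / (fact k * norm (pochhammer c k))"
  by (simp add: gt_def norm_mult norm_divide)

lemma gt_tannery:
  fixes a b c :: complex
  shows "(\<lambda>m. suminf (gt a b (c + of_nat m))) \<longlonglongrightarrow> 1"
proof -
  define \<alpha> where "\<alpha> = norm a"
  define \<beta> where "\<beta> = norm b"
  define r where "r = 3*\<alpha>*\<beta> + 3*\<alpha> + 3*\<beta> + 3"
  define M where "M k = pochhammer \<alpha> k * pochhammer \<beta> k / (fact k * pochhammer r k)" for k
  have ab0: "\<alpha> \<ge> 0" "\<beta> \<ge> 0" unfolding \<alpha>_def \<beta>_def by auto
  have "3*\<alpha>*\<beta> \<ge> 0" using ab0 by simp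
  hence rpos: "r > 0" unfolding r_def using ab0 by linarith
  define m0 where "m0 = nat \<lceil>r - Re c\<rceil>"
  have m0: "Re c + real m0 \<ge> r" unfolding m0_def by linarith
  have bound: "norm (gt a b (c + of_nat m) k) \<le> M k" if "m \<ge> m0" for k m
  proof -
    have "r \<le> Re (c + of_nat m)" using m0 that by simp
    hence pl: "pochhammer r k \<le> norm (pochhammer (c + of_nat m) k)"
      by (rule norm_poch_ge) (use rpos in auto)
    have pr: "pochhammer r k > 0" using rpos by (simp add: pochhammer_pos)
    have "norm (gt a b (c + of_nat m) k) = norm (pochhammer a k) * norm (pochhammer b k) / (fact k * norm (pochhammer (c + of_nat m) k))"
      by (rule norm_gt)
    also have "\<dots> \<le> pochhammer \<alpha> k * pochhammer \<beta> k / (fact k * pochhammer r k)"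
    proof (rule frac_le)
      show "0 \<le> pochhammer \<alpha> k * pochhammer \<beta> k" using ab0 by (intro mult_nonneg_nonneg poch_nonneg0)
      show "norm (pochhammer a k) * norm (pochhammer b k) \<le> pochhammer \<alpha> k * pochhammer \<beta> k"
        unfolding \<alpha>_def \<beta>_def by (intro mult_mono norm_poch_le poch_nonneg0) auto
      show "0 < fact k * pochhammer r k" using pr by simp
      show "fact k * pochhammer r k \<le> fact k * norm (pochhammer (c + of_nat m) k)"
        using pl by (intro mult_left_mono) auto
    qed
    finally show ?thesis unfolding M_def .
  qed
  have sM: "summable M"
  proof (rule summable_comparison_test[OF _ summable_g2])
    show "\<exists>N. \<forall>n\<ge>N. norm (M n) \<le> 2 / ((real n + 1) * (real n + 2))"
    proof (intro exI allI impI)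
      fix n :: nat
      have "M n \<ge> 0" unfolding M_def using ab0 rpos
        by (intro divide_nonneg_nonneg mult_nonneg_nonneg poch_nonneg0) auto
      thus "norm (M n) \<le> 2 / ((real n + 1) * (real n + 2))"
        using M_bound[OF ab0 r_def, of n] unfolding M_def by simp
    qed
  qed
  have lim: "(\<lambda>m. gt a b (c + of_nat m) k) \<longlonglongrightarrow> (if k = 0 then 1 else 0)" for k
  proof (cases "k = 0")
    case True thus ?thesis by (simp add: gt_def)
  next
    case False
    define K where "K = norm (pochhammer a k) * norm (pochhammer b k) / fact k"
    define m1 where "m1 = nat \<lceil>1 - Re c\<rceil>"
    have "(\<lambda>m. gt a b (c + of_nat m) k) \<longlonglongrightarrow> 0"
    proof (rule Lim_null_comparison)
      show "eventually (\<lambda>m. norm (gt a b (c + of_nat m) k) \<le> K / (Re c + real m)) sequentially"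
        using eventually_ge_at_top[of m1]
      proof eventually_elim
        case (elim m)
        have x1: "Re c + real m \<ge> 1" using elim unfolding m1_def by linarith
        have "Re c + real m \<le> pochhammer (Re c + real m) k"
          using x1 False by (intro poch_ge_self) auto
        also have "\<dots> \<le> norm (pochhammer (c + of_nat m) k)"
          by (rule norm_poch_ge) (use x1 in auto)
        finally have pl: "Re c + real m \<le> norm (pochhammer (c + of_nat m) k)" .
        have "norm (gt a b (c + of_nat m) k) = K / norm (pochhammer (c + of_nat m) k)"
          unfolding norm_gt K_def by simp
        also have "\<dots> \<le> K / (Re c + real m)"
          unfolding K_def using x1 pl by (intro divide_left_mono mult_pos_pos) auto
        finally show ?case .
      qed
      have "filterlim (\<lambda>m. Re c + real m) at_top sequentially"
        by (intro filterlim_tendsto_add_at_top[OF tendsto_const] filterlim_real_sequentially)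
      thus "(\<lambda>m. K / (Re c + real m)) \<longlonglongrightarrow> 0"
        by (intro tendsto_divide_0[OF tendsto_const] filterlim_at_top_imp_at_infinity)
    qed
    thus ?thesis using False by simp
  qed
  have ev: "eventually (\<lambda>(k, m). norm (gt a b (c + of_nat m) k) \<le> M k) (at_top \<times>\<^sub>F sequentially)"
    unfolding eventually_prod_filter
    by (intro exI[of _ "\<lambda>_. True"] exI[of _ "\<lambda>m. m \<ge> m0"] conjI)
       (auto simp: bound eventually_ge_at_top)
  from tannerys_theorem[of "\<lambda>k m. gt a b (c + of_nat m) k" "\<lambda>k. if k = 0 then 1 else 0" sequentially M, OF lim ev sM]
  have "(\<lambda>m. suminf (gt a b (c + of_nat m))) \<longlonglongrightarrow> (\<Sum>k. if k = 0 then 1 else 0)" by simp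
  also have "(\<Sum>k. if k = 0 then 1 else (0::complex)) = 1"
    using sums_single[of 0 "\<lambda>_. 1::complex"] by (simp add: sums_iff)
  finally show ?thesis .
qed

theorem gauss:
  assumes "c \<notin> \<int>\<^sub>\<le>\<^sub>0" "Re (c - a - b) > 0"
  shows "gt a b c sums (rGamma (c - a) * rGamma (c - b) / (rGamma c * rGamma (c - a - b)))"
proof -
  define L where "L = rGamma (c - a) * rGamma (c - b) / (rGamma c * rGamma (c - a - b))"
  define S where "S = suminf (gt a b c)"
  have it: "S = pochhammer (c - a) (Suc m) * pochhammer (c - b) (Suc m) /
           (pochhammer c (Suc m) * pochhammer (c - a - b) (Suc m)) * suminf (gt a b (c + of_nat (Suc m)))" for m
    unfolding S_def by (rule gauss_iter[OF assms])
  have "(\<lambda>m. pochhammer (c - a) (Suc m) * pochhammer (c - b) (Suc m) /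
           (pochhammer c (Suc m) * pochhammer (c - a - b) (Suc m)) * suminf (gt a b (c + of_nat (Suc m)))) \<longlonglongrightarrow> L * 1"
    unfolding L_def by (intro tendsto_mult poch_ratio_lim[OF assms] LIMSEQ_Suc[OF gt_tannery])
  moreover have "(\<lambda>m. S) = (\<lambda>m. pochhammer (c - a) (Suc m) * pochhammer (c - b) (Suc m) /
           (pochhammer c (Suc m) * pochhammer (c - a - b) (Suc m)) * suminf (gt a b (c + of_nat (Suc m))))"
    by (rule ext) (rule it)
  ultimately have "(\<lambda>m. S) \<longlonglongrightarrow> L" by simp
  hence "S = L" by (simp add: LIMSEQ_const_iff)
  moreover have "gt a b c sums S" unfolding S_def by (rule summable_sums[OF gt_summable[OF assms]])
  ultimately show ?thesis unfolding L_def by simp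
qed



definition cn :: "complex \<Rightarrow> nat \<Rightarrow> complex" where "cn v n = pochhammer v n / fact n"
definition H :: "complex \<Rightarrow> complex \<Rightarrow> complex" where "H v s = Gamma s * Gamma (1 - v) * rGamma (1 + s - v)"

lemma aux4: fixes pv p t s f :: complex
  shows "p \<noteq> 0 \<Longrightarrow> t \<noteq> 0 \<Longrightarrow> s \<noteq> 0 \<Longrightarrow> f \<noteq> 0 \<Longrightarrow> pv * p / (f * (p * t / s)) / s = pv / f / t"
  by (simp add: field_simps)

lemma H_sums:
  assumes "s \<notin> \<int>\<^sub>\<le>\<^sub>0" "Re v < 1"
  shows "(\<lambda>n. cn v n / (of_nat n + s)) sums H v s"
proof -
  have c: "s + 1 \<notin> \<int>\<^sub>\<le>\<^sub>0" using nonpos_plus_nat[OF assms(1), of 1] by simp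
  have g: "gt v s (s + 1) sums (rGamma (s + 1 - v) * rGamma (s + 1 - s) / (rGamma (s + 1) * rGamma (s + 1 - v - s)))"
    by (rule gauss[OF c]) (use assms(2) in simp)
  have s0: "s \<noteq> 0" using assms(1) by auto
  have e: "gt v s (s + 1) n / s = cn v n / (of_nat n + s)" for n
  proof -
    have "s * pochhammer (s + 1) n = pochhammer s n * (s + of_nat n)"
      by (metis pochhammer_Suc pochhammer_rec)
    hence p: "pochhammer (s + 1) n = pochhammer s n * (s + of_nat n) / s" using s0
      by (simp add: field_simps)
    have "gt v s (s + 1) n / s = pochhammer v n / fact n / (s + of_nat n)"
      unfolding gt_def p
      by (rule aux4) (use poch_ne0[OF assms(1), of n] nonpos_plus_nat_ne0[OF assms(1), of n] s0 in auto)
    thus ?thesis unfolding cn_def by (simp add: add.commute)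
  qed
  have "(\<lambda>n. gt v s (s + 1) n / s) sums ((rGamma (s + 1 - v) * rGamma (s + 1 - s) / (rGamma (s + 1) * rGamma (s + 1 - v - s))) / s)"
    by (rule sums_divide[OF g])
  also have "(rGamma (s + 1 - v) * rGamma (s + 1 - s) / (rGamma (s + 1) * rGamma (s + 1 - v - s))) / s = H v s"
  proof -
    have r: "s * rGamma (s + 1) = rGamma s" by (rule rGamma_plus1)
    have "(rGamma (s + 1 - v) * rGamma (s + 1 - s) / (rGamma (s + 1) * rGamma (s + 1 - v - s))) / s
        = rGamma (1 + s - v) / ((s * rGamma (s + 1)) * rGamma (1 - v))"
      by (simp add: algebra_simps)
    also have "\<dots> = H v s" unfolding r H_def by (simp add: Gamma_def field_simps)
    finally show ?thesis .
  qed
  finally show ?thesis unfolding e .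
qed

lemma sin_pi_eq0_Ints: "sin (of_real pi * z) = 0 \<Longrightarrow> (z::complex) \<in> \<int>"
proof -
  assume "sin (of_real pi * z) = 0"
  then obtain n :: int where "of_real pi * z = of_real (of_int n * pi)" by (auto simp: sin_eq_0)
  hence "z = of_int n" by (simp add: field_simps)
  thus ?thesis by simp
qed

lemma cos_pi_half_eq0_Ints: "cos (of_real pi * z / 2) = 0 \<Longrightarrow> (z::complex) \<in> \<int>"
proof -
  assume "cos (of_real pi * z / 2) = 0"
  then obtain n :: int where "of_real pi * z / 2 = of_real (of_int n * pi) + of_real pi / 2" by (auto simp: cos_eq_0)
  hence "(z - (1 + of_int n * 2)) * of_real pi = 0" by (simp add: algebra_simps)
  hence "z = 1 + of_int n * 2" by simp
  hence "z = of_int (2 * n + 1)" by simp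
  thus ?thesis by (simp only: Ints_of_int)
qed

lemma rGamma_one_minus:
  fixes z :: complex
  assumes "z \<notin> \<int>\<^sub>\<le>\<^sub>0"
  shows "rGamma (1 - z) = Gamma z * sin (of_real pi * z) / of_real pi"
proof -
  have "rGamma z \<noteq> 0" using assms by (simp add: rGamma_eq_zero_iff)
  thus ?thesis using rGamma_reflection_complex[of z] by (simp add: Gamma_def field_simps)
qed

lemma pair_formula:
  assumes "v/2 - w \<notin> \<int>\<^sub>\<le>\<^sub>0" "v/2 + w \<notin> \<int>\<^sub>\<le>\<^sub>0" "v \<notin> \<int>"
  shows "H v (v/2 - w) + H v (v/2 + w) =
     Gamma (v/2 - w) * Gamma (v/2 + w) * cos (w * of_real pi) * rGamma v / cos (v * of_real pi / 2)"
proof -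
  have vn: "v \<notin> \<int>\<^sub>\<le>\<^sub>0" using assms(3) nonpos_Ints_subset_Ints by blast
  have s2: "sin (of_real pi * v / 2) \<noteq> 0"
  proof
    assume "sin (of_real pi * v / 2) = 0"
    hence "v / 2 \<in> \<int>" using sin_pi_eq0_Ints[of "v/2"] by simp
    hence "2 * (v/2) \<in> \<int>" by (intro Ints_mult) auto
    thus False using assms(3) by simp
  qed
  have c2: "cos (of_real pi * v / 2) \<noteq> 0" using cos_pi_half_eq0_Ints assms(3) by blast
  have G1: "Gamma (1 - v) = of_real pi / sin (of_real pi * v) * rGamma v"
  proof -
    have sv: "sin (of_real pi * v) \<noteq> 0" using sin_pi_eq0_Ints assms(3) by blast
    have rv: "rGamma v \<noteq> 0" using vn by (simp add: rGamma_eq_zero_iff)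
    have r1: "rGamma (1 - v) = sin (of_real pi * v) / of_real pi / rGamma v"
      using rGamma_reflection_complex[of v] rv by (simp add: field_simps)
    show ?thesis unfolding Gamma_def r1 using sv rv by (simp add: field_simps)
  qed
  have sd: "sin (of_real pi * v) = 2 * sin (of_real pi * v / 2) * cos (of_real pi * v / 2)"
    using sin_double[of "of_real pi * v / 2"] by simp
  have e1: "1 + (v/2 - w) - v = 1 - (v/2 + w)" by simp
  have e2: "1 + (v/2 + w) - v = 1 - (v/2 - w)" by simp
  have ss: "sin (of_real pi * (v/2 + w)) + sin (of_real pi * (v/2 - w)) = 2 * sin (of_real pi * v / 2) * cos (w * of_real pi)"
    unfolding sin_plus_sin by (simp add: algebra_simps)
  have "H v (v/2 - w) + H v (v/2 + w) = Gamma (1 - v) * Gamma (v/2 - w) * Gamma (v/2 + w) *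
      (sin (of_real pi * (v/2 + w)) + sin (of_real pi * (v/2 - w))) / of_real pi"
    unfolding H_def e1 e2 rGamma_one_minus[OF assms(1)] rGamma_one_minus[OF assms(2)]
    by (simp add: field_simps)
  also have "\<dots> = Gamma (v/2 - w) * Gamma (v/2 + w) * cos (w * of_real pi) * rGamma v / cos (v * of_real pi / 2)"
    unfolding ss G1 sd using s2 c2 by (simp add: field_simps)
  finally show ?thesis .
qed



lemma cn_Suc: "cn v (Suc n) = cn v n * ((v + of_nat n) / (of_nat n + 1))"
proof -
  have f: "fact (Suc n) = (of_nat n + 1) * (fact n :: complex)" by (simp add: algebra_simps)
  have "(of_nat n + 1 :: complex) \<noteq> 0" by (rule of_nat_plus1_ne0)
  thus ?thesis unfolding cn_def pochhammer_Suc f by (simp add: field_simps)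
qed

lemma norm_one_plus:
  fixes u :: complex and m :: real
  assumes "m > 0"
  shows "norm (1 + u / of_real m) \<le> exp (Re u / m + (norm u)^2 / (2 * m^2))"
proof (rule power2_le_imp_le)
  have "(norm (1 + u / of_real m))^2 = (1 + Re u / m)^2 + (Im u / m)^2"
    unfolding cmod_power2 using assms by simp
  also have "\<dots> = 1 + (2 * (Re u / m + (norm u)^2 / (2 * m^2)))"
    unfolding cmod_power2 using assms by (simp add: power2_eq_square field_simps)
  also have "\<dots> \<le> exp (2 * (Re u / m + (norm u)^2 / (2 * m^2)))" by (rule exp_ge_add_one_self)
  also have "\<dots> = (exp (Re u / m + (norm u)^2 / (2 * m^2)))^2"
    by (simp add: power2_eq_square exp_add[symmetric])
  finally show "(norm (1 + u / of_real m))^2 \<le> (exp (Re u / m + (norm u)^2 / (2 * m^2)))^2" .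
qed simp

lemma h2aux: "(x::real) \<ge> 0 \<Longrightarrow> 1 - 1 / (x + 1) + 1 / ((x + 1) * (x + 2)) = 1 - 1 / (x + 2)"
proof -
  assume x: "x \<ge> 0"
  have a: "1 / (x + 1) = (x + 2) / ((x + 1) * (x + 2))" using x by simp
  have "1 / (x + 1) - 1 / ((x + 1) * (x + 2)) = ((x + 2) - 1) / ((x + 1) * (x + 2))"
    unfolding a diff_divide_distrib ..
  also have "(x + 2) - 1 = x + 1" by simp
  also have "(x + 1) / ((x + 1) * (x + 2)) = 1 / (x + 2)" using x by simp
  finally show ?thesis by linarith
qed

lemma cn_bound:
  assumes "Re v \<le> \<rho>" "1 \<le> \<rho>" "norm (v - 1) \<le> R"
  shows "norm (cn v n) \<le> exp ((\<rho> - 1) * harm n + R^2 * (1 - 1 / (real n + 1)))"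
proof (induction n)
  case 0 thus ?case by (simp add: cn_def harm_def)
next
  case (Suc n)
  have R0: "R \<ge> 0" using assms(3) norm_ge_zero order_trans by blast
  have m: "real n + 1 > 0" by simp
  have e: "(v + of_nat n) / (of_nat n + 1) = 1 + (v - 1) / of_real (real n + 1)"
    using of_nat_plus1_ne0[of n] by (simp add: field_simps add.commute)
  have "norm ((v + of_nat n) / (of_nat n + 1)) \<le> exp (Re (v - 1) / (real n + 1) + (norm (v - 1))^2 / (2 * (real n + 1)^2))"
    unfolding e by (rule norm_one_plus[OF m])
  also have "\<dots> \<le> exp ((\<rho> - 1) / (real n + 1) + R^2 / ((real n + 1) * (real n + 2)))"
  proof (intro exp_mono add_mono)
    show "Re (v - 1) / (real n + 1) \<le> (\<rho> - 1) / (real n + 1)" using assms(1) by (intro divide_right_mono) auto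
    have "(norm (v - 1))^2 \<le> R^2" using assms(3) by (intro power_mono) auto
    moreover have "1 / (2 * (real n + 1)^2) \<le> 1 / ((real n + 1) * (real n + 2))"
      by (intro divide_left_mono) (auto simp: power2_eq_square)
    ultimately have "(norm (v - 1))^2 * (1 / (2 * (real n + 1)^2)) \<le> R^2 * (1 / ((real n + 1) * (real n + 2)))"
      by (intro mult_mono) auto
    thus "(norm (v - 1))^2 / (2 * (real n + 1)^2) \<le> R^2 / ((real n + 1) * (real n + 2))" by simp
  qed
  finally have f: "norm ((v + of_nat n) / (of_nat n + 1)) \<le> exp ((\<rho> - 1) / (real n + 1) + R^2 / ((real n + 1) * (real n + 2)))" .
  have "norm (cn v (Suc n)) = norm (cn v n) * norm ((v + of_nat n) / (of_nat n + 1))"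
    unfolding cn_Suc by (rule norm_mult)
  also have "\<dots> \<le> exp ((\<rho> - 1) * harm n + R^2 * (1 - 1 / (real n + 1))) * exp ((\<rho> - 1) / (real n + 1) + R^2 / ((real n + 1) * (real n + 2)))"
    using Suc.IH f by (intro mult_mono norm_ge_zero exp_ge_zero)
  also have "\<dots> = exp ((\<rho> - 1) * harm (Suc n) + R^2 * (1 - 1 / (real (Suc n) + 1)))"
  proof -
    have "(\<rho> - 1) * harm n + R^2 * (1 - 1 / (real n + 1)) + ((\<rho> - 1) / (real n + 1) + R^2 / ((real n + 1) * (real n + 2)))
        = (\<rho> - 1) * harm (Suc n) + R^2 * (1 - 1 / (real (Suc n) + 1))"
    proof -
      have h1: "(\<rho> - 1) * harm n + (\<rho> - 1) / (real n + 1) = (\<rho> - 1) * harm (Suc n)"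
        by (simp add: harm_Suc field_simps)
      have h2: "1 - 1 / (real n + 1) + 1 / ((real n + 1) * (real n + 2)) = 1 - 1 / (real (Suc n) + 1)"
      proof -
        have "real (Suc n) + 1 = real n + 2" by simp
        thus ?thesis by (simp only:) (rule h2aux, simp)
      qed
      have h3: "R^2 * (1 - 1 / (real n + 1)) + R^2 / ((real n + 1) * (real n + 2)) = R^2 * (1 - 1 / (real n + 1) + 1 / ((real n + 1) * (real n + 2)))"
        by (simp add: distrib_left)
      have h2m: "R^2 * (1 - 1 / (real n + 1) + 1 / ((real n + 1) * (real n + 2))) = R^2 * (1 - 1 / (real (Suc n) + 1))"
        unfolding h2 ..
      show ?thesis by (simp only: h1[symmetric] h2m[symmetric] h3[symmetric])
    qed
    thus ?thesis by (simp only: exp_add[symmetric])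
  qed
  finally show ?case .
qed

lemma harm_le_1_ln: "n > 0 \<Longrightarrow> harm n \<le> 1 + ln (real n)"
  using euler_mascheroni_sequence_decreasing[of 1 n] by (simp add: harm_def)

lemma cn_bound2:
  assumes "Re v \<le> \<rho>" "1 \<le> \<rho>" "norm (v - 1) \<le> R" "n > 0"
  shows "norm (cn v n) \<le> exp (R^2 + \<rho> - 1) * real n powr (\<rho> - 1)"
proof -
  have "norm (cn v n) \<le> exp ((\<rho> - 1) * harm n + R^2 * (1 - 1 / (real n + 1)))"
    by (rule cn_bound[OF assms(1-3)])
  also have "\<dots> \<le> exp ((\<rho> - 1) * (1 + ln (real n)) + R^2)"
  proof (intro exp_mono add_mono mult_left_mono)
    show "harm n \<le> 1 + ln (real n)" by (rule harm_le_1_ln[OF assms(4)])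
    show "R^2 * (1 - 1 / (real n + 1)) \<le> R^2" by (simp add: mult_left_le)
  qed (use assms in auto)
  also have "\<dots> = exp (R^2 + \<rho> - 1) * real n powr (\<rho> - 1)"
    using assms(4) by (simp add: powr_def exp_add[symmetric] algebra_simps)
  finally show ?thesis .
qed



definition qq :: "complex \<Rightarrow> complex \<Rightarrow> complex \<Rightarrow> nat \<Rightarrow> complex" where
  "qq w1 w2 v n = 1 / (of_nat n + (v/2 - w2)) + 1 / (of_nat n + (v/2 + w2))
                 - 1 / (of_nat n + (v/2 - w1)) - 1 / (of_nat n + (v/2 + w1))"

definition Lf :: "complex \<Rightarrow> complex \<Rightarrow> complex \<Rightarrow> complex" where
  "Lf w1 w2 v = (\<Sum>n. cn v n * qq w1 w2 v n)"

lemma qq_aux: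
  fixes x w1 w2 :: complex
  assumes "x - w2 \<noteq> 0" "x + w2 \<noteq> 0" "x - w1 \<noteq> 0" "x + w1 \<noteq> 0"
  shows "1 / (x - w2) + 1 / (x + w2) - 1 / (x - w1) - 1 / (x + w1) =
         2 * x * (w2^2 - w1^2) / (((x - w2) * (x + w2)) * ((x - w1) * (x + w1)))"
  using assms apply (simp add: divide_simps power2_eq_square) by (simp add: algebra_simps)

lemma qq_alt:
  fixes v w1 w2 x :: complex
  assumes x_def: "x = of_nat n + v / 2"
  assumes "x - w2 \<noteq> 0" "x + w2 \<noteq> 0" "x - w1 \<noteq> 0" "x + w1 \<noteq> 0"
  shows "qq w1 w2 v n = 2 * x * (w2^2 - w1^2) / (((x - w2) * (x + w2)) * ((x - w1) * (x + w1)))"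
proof -
  have "qq w1 w2 v n = 1 / (x - w2) + 1 / (x + w2) - 1 / (x - w1) - 1 / (x + w1)"
    unfolding qq_def x_def by (simp add: algebra_simps)
  also have "\<dots> = 2 * x * (w2^2 - w1^2) / (((x - w2) * (x + w2)) * ((x - w1) * (x + w1)))"
    by (rule qq_aux[OF assms(2-5)])
  finally show ?thesis .
qed

lemma norm_lower:
  fixes y :: complex
  shows "real n - norm y \<le> norm (of_nat n + y)"
  using norm_diff_ineq[of "of_nat n" y] by simp

lemma qq_bound:
  fixes v w1 w2 :: complex
  assumes "norm v \<le> V" "norm w1 \<le> W" "norm w2 \<le> W" "real n \<ge> V + 2 * W + 1"
  shows "norm (qq w1 w2 v n) \<le> 48 * norm (w2^2 - w1^2) * real n powr (-3)"
proof -
  define x where "x = of_nat n + v / 2"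
  have V0: "V \<ge> 0" using assms(1) norm_ge_zero order_trans by blast
  have W0: "W \<ge> 0" using assms(2) norm_ge_zero order_trans by blast
  have npos: "real n > 0" using assms(4) V0 W0 by linarith
  have low: "norm (x + s * w) \<ge> real n / 2" if "norm w \<le> W" "s = 1 \<or> s = -1" for w s
  proof -
    have "norm (v / 2 + s * w) \<le> norm (v / 2) + norm (s * w)" by (rule norm_triangle_ineq)
    also have "norm (s * w) = norm w" using that(2) by auto
    also have "norm (v / 2) = norm v / 2" by simp
    finally have "norm (v / 2 + s * w) \<le> V / 2 + W" using assms(1) that(1) by linarith
    moreover have "real n - norm (v / 2 + s * w) \<le> norm (of_nat n + (v / 2 + s * w))" by (rule norm_lower)
    moreover have "norm (x + s * w) = norm (of_nat n + (v / 2 + s * w))" unfolding x_def by (simp add: add.assoc)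
    ultimately show ?thesis using assms(4) by linarith
  qed
  have l1: "norm (x - w2) \<ge> real n / 2" using low[OF assms(3), of "-1"] by simp
  have l2: "norm (x + w2) \<ge> real n / 2" using low[OF assms(3), of 1] by simp
  have l3: "norm (x - w1) \<ge> real n / 2" using low[OF assms(2), of "-1"] by simp
  have l4: "norm (x + w1) \<ge> real n / 2" using low[OF assms(2), of 1] by simp
  have nz: "x - w2 \<noteq> 0" "x + w2 \<noteq> 0" "x - w1 \<noteq> 0" "x + w1 \<noteq> 0"
    using l1 l2 l3 l4 npos by auto
  have up: "norm (2 * x) \<le> 3 * real n"
  proof -
    have "norm (2 * x) = norm (2 * of_nat n + v)" unfolding x_def by (simp add: algebra_simps)
    also have "\<dots> \<le> norm (2 * of_nat n :: complex) + norm v" by (rule norm_triangle_ineq)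
    also have "norm (2 * of_nat n :: complex) = 2 * real n" by (simp add: norm_mult)
    finally show ?thesis using assms(1) assms(4) W0 by linarith
  qed
  have "norm (qq w1 w2 v n) = norm (2 * x) * norm (w2^2 - w1^2) /
        ((norm (x - w2) * norm (x + w2)) * (norm (x - w1) * norm (x + w1)))"
    unfolding qq_alt[OF x_def nz] by (simp add: norm_mult norm_divide)
  also have "\<dots> \<le> (3 * real n) * norm (w2^2 - w1^2) / (((real n / 2) * (real n / 2)) * ((real n / 2) * (real n / 2)))"
    using l1 l2 l3 l4 up npos
    by (intro frac_le mult_mono mult_nonneg_nonneg) auto
  also have "\<dots> = 48 * norm (w2^2 - w1^2) * real n powr (-3)"
    using npos by (simp add: powr_minus powr_realpow field_simps power3_eq_cube)
  finally show ?thesis .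
qed



lemma tm_bound:
  assumes "Re v \<le> \<rho>" "1 \<le> \<rho>" "norm (v - 1) \<le> R" "norm v \<le> V" "norm w1 \<le> W" "norm w2 \<le> W"
    "real n \<ge> V + 2 * W + 1"
  shows "norm (cn v n * qq w1 w2 v n) \<le> exp (R^2 + \<rho> - 1) * (48 * norm (w2^2 - w1^2)) * real n powr (\<rho> - 4)"
proof -
  have V0: "V \<ge> 0" using assms(4) norm_ge_zero order_trans by blast
  have W0: "W \<ge> 0" using assms(5) norm_ge_zero order_trans by blast
  have npos: "n > 0" using assms(7) V0 W0 by (cases n) auto
  have "norm (cn v n * qq w1 w2 v n) = norm (cn v n) * norm (qq w1 w2 v n)" by (rule norm_mult)
  also have "\<dots> \<le> (exp (R^2 + \<rho> - 1) * real n powr (\<rho> - 1)) * (48 * norm (w2^2 - w1^2) * real n powr (-3))"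
    by (intro mult_mono cn_bound2[OF assms(1-3) npos] qq_bound[OF assms(4-7)]) auto
  also have "\<dots> = exp (R^2 + \<rho> - 1) * (48 * norm (w2^2 - w1^2)) * (real n powr (\<rho> - 1) * real n powr (-3))"
    by (simp only: mult_ac)
  also have "real n powr (\<rho> - 1) * real n powr (-3) = real n powr (\<rho> - 4)"
    by (simp add: powr_add[symmetric])
  finally show ?thesis .
qed

lemma ne_nat_plus: "(s::complex) \<notin> \<int>\<^sub>\<le>\<^sub>0 \<Longrightarrow> of_nat i + s \<noteq> 0"
  using nonpos_plus_nat_ne0[of s i] by (simp add: add.commute)

lemma Lf_holo:
  assumes U: "open U" and re: "\<And>v. v \<in> U \<Longrightarrow> Re v < 3"
    and p1: "\<And>v. v \<in> U \<Longrightarrow> v/2 - w1 \<notin> \<int>\<^sub>\<le>\<^sub>0" and p2: "\<And>v. v \<in> U \<Longrightarrow> v/2 + w1 \<notin> \<int>\<^sub>\<le>\<^sub>0"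
    and p3: "\<And>v. v \<in> U \<Longrightarrow> v/2 - w2 \<notin> \<int>\<^sub>\<le>\<^sub>0" and p4: "\<And>v. v \<in> U \<Longrightarrow> v/2 + w2 \<notin> \<int>\<^sub>\<le>\<^sub>0"
  shows "Lf w1 w2 holomorphic_on U"
proof -
  have hs: "(\<lambda>v. \<Sum>i<N. cn v i * qq w1 w2 v i) holomorphic_on U" for N
    unfolding cn_def qq_def
    by (intro holomorphic_intros) (auto intro!: ne_nat_plus p1 p2 p3 p4)
  have "Lf w1 w2 analytic_on U"
    unfolding analytic_on_def
  proof
    fix z assume zU: "z \<in> U"
    obtain e where e: "e > 0" "cball z e \<subseteq> U" using U zU open_contains_cball by blast
    define r where "r = min e ((3 - Re z) / 2)"
    have rpos: "r > 0" unfolding r_def using e re[OF zU] by auto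
    have sub: "cball z r \<subseteq> U" using e(2) unfolding r_def by auto
    define \<rho> where "\<rho> = max 1 ((Re z + 3) / 2)"
    define R where "R = norm (z - 1) + r"
    define V where "V = norm z + r"
    define W where "W = norm w1 + norm w2"
    define K where "K = exp (R^2 + \<rho> - 1) * (48 * norm (w2^2 - w1^2))"
    have \<rho>3: "\<rho> < 3" unfolding \<rho>_def using re[OF zU] by auto
    have bnd: "norm (cn v n * qq w1 w2 v n) \<le> K * real n powr (\<rho> - 4)"
      if v: "v \<in> cball z r" and n: "real n \<ge> V + 2 * W + 1" for v n
    proof -
      have d: "norm (v - z) \<le> r" using v by (simp add: dist_norm norm_minus_commute)
      have "Re v - Re z \<le> norm (v - z)" using complex_Re_le_cmod[of "v - z"] by simp
      moreover have "r \<le> (3 - Re z) / 2" unfolding r_def by (rule min.cobounded2)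
      ultimately have "Re v \<le> (Re z + 3) / 2" using d by argo
      hence "Re v \<le> \<rho>" unfolding \<rho>_def by (rule max.coboundedI2)
      moreover have "norm (v - 1) \<le> R"
        using norm_triangle_ineq[of "v - z" "z - 1"] d unfolding R_def by simp
      moreover have "norm v \<le> V"
        using norm_triangle_ineq[of "v - z" z] d unfolding V_def by simp
      moreover have "norm w1 \<le> W" "norm w2 \<le> W" unfolding W_def by auto
      ultimately show ?thesis unfolding K_def
        by (intro tm_bound) (use n in \<open>auto simp: \<rho>_def\<close>)
    qed
    have ev: "eventually (\<lambda>n. \<forall>v\<in>cball z r. norm (cn v n * qq w1 w2 v n) \<le> K * real n powr (\<rho> - 4)) sequentially"
      using eventually_ge_at_top[of "nat \<lceil>V + 2 * W + 1\<rceil>"]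
    proof eventually_elim
      case (elim n)
      have "V + 2 * W + 1 \<le> real (nat \<lceil>V + 2 * W + 1\<rceil>)" by (rule real_nat_ceiling_ge)
      also have "\<dots> \<le> real n" using elim by simp
      finally show ?case using bnd by blast
    qed
    have sM: "summable (\<lambda>n. K * real n powr (\<rho> - 4))"
      using \<rho>3 by (intro summable_mult) (simp add: summable_real_powr_iff)
    have ulim: "uniform_limit (cball z r) (\<lambda>n v. \<Sum>i<n. cn v i * qq w1 w2 v i)
                  (\<lambda>v. \<Sum>i. cn v i * qq w1 w2 v i) sequentially"
      by (rule Weierstrass_m_test_ev[OF ev sM])
    have cont: "eventually (\<lambda>n. continuous_on (cball z r) (\<lambda>v. \<Sum>i<n. cn v i * qq w1 w2 v i) \<and>
                   (\<lambda>v. \<Sum>i<n. cn v i * qq w1 w2 v i) holomorphic_on ball z r) sequentially"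
    proof (intro always_eventually allI conjI)
      fix n
      have sub2: "ball z r \<subseteq> U" using sub ball_subset_cball by blast
      show "continuous_on (cball z r) (\<lambda>v. \<Sum>i<n. cn v i * qq w1 w2 v i)"
        by (rule holomorphic_on_imp_continuous_on[OF holomorphic_on_subset[OF hs sub]])
      show "(\<lambda>v. \<Sum>i<n. cn v i * qq w1 w2 v i) holomorphic_on ball z r"
        by (rule holomorphic_on_subset[OF hs sub2])
    qed
    obtain "(\<lambda>v. \<Sum>i. cn v i * qq w1 w2 v i) holomorphic_on ball z r"
      using holomorphic_uniform_limit[OF cont ulim trivial_limit_sequentially] by blast
    hence "Lf w1 w2 holomorphic_on ball z r" unfolding Lf_def[abs_def] .
    thus "\<exists>\<epsilon>>0. Lf w1 w2 holomorphic_on ball z \<epsilon>" using rpos by blast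
  qed
  thus ?thesis by (rule analytic_imp_holomorphic)
qed



definition Rf :: "complex \<Rightarrow> complex \<Rightarrow> complex \<Rightarrow> complex" where
  "Rf w1 w2 v = (Gamma (v/2 - w2) * Gamma (v/2 + w2) * cos (w2 * of_real pi)
     - Gamma (v/2 - w1) * Gamma (v/2 + w1) * cos (w1 * of_real pi)) * rGamma v / cos (v * of_real pi / 2)"

lemma notInts_nonpos: "(z::complex) \<notin> \<int> \<Longrightarrow> z \<notin> \<int>\<^sub>\<le>\<^sub>0"
  using nonpos_Ints_subset_Ints by blast

lemma aux_div: fixes A B P Q r c :: complex
  shows "A * P * r / c - B * Q * r / c = (A * P - B * Q) * r / c"
  by (simp add: diff_divide_distrib left_diff_distrib)

lemma small_eq:
  assumes "Re v < 1" "v \<notin> \<int>" "v/2 - w1 \<notin> \<int>" "v/2 + w1 \<notin> \<int>" "v/2 - w2 \<notin> \<int>" "v/2 + w2 \<notin> \<int>"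
  shows "Lf w1 w2 v = Rf w1 w2 v"
proof -
  note np = notInts_nonpos[OF assms(3)] notInts_nonpos[OF assms(4)] notInts_nonpos[OF assms(5)] notInts_nonpos[OF assms(6)]
  have S: "(\<lambda>n. cn v n / (of_nat n + (v/2 - w2)) + cn v n / (of_nat n + (v/2 + w2))
              - cn v n / (of_nat n + (v/2 - w1)) - cn v n / (of_nat n + (v/2 + w1)))
        sums (H v (v/2 - w2) + H v (v/2 + w2) - H v (v/2 - w1) - H v (v/2 + w1))"
    by (intro sums_diff sums_add H_sums np assms(1))
  have e: "(\<lambda>n. cn v n / (of_nat n + (v/2 - w2)) + cn v n / (of_nat n + (v/2 + w2))
              - cn v n / (of_nat n + (v/2 - w1)) - cn v n / (of_nat n + (v/2 + w1)))
          = (\<lambda>n. cn v n * qq w1 w2 v n)"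
    by (rule ext) (simp add: qq_def algebra_simps)
  have "Lf w1 w2 v = H v (v/2 - w2) + H v (v/2 + w2) - H v (v/2 - w1) - H v (v/2 + w1)"
    using S unfolding e Lf_def by (rule sums_unique[symmetric])
  also have "\<dots> = (H v (v/2 - w2) + H v (v/2 + w2)) - (H v (v/2 - w1) + H v (v/2 + w1))" by simp
  also have "\<dots> = Rf w1 w2 v"
    unfolding pair_formula[OF np(3) np(4) assms(2)] pair_formula[OF np(1) np(2) assms(2)] Rf_def
    by (rule aux_div)
  finally show ?thesis .
qed

lemma countable_Ints_complex: "countable (\<int> :: complex set)"
  unfolding Ints_def by simp

lemma Lf_eq_Rf:
  assumes "Re v < 3" "cos (v * of_real pi / 2) \<noteq> 0"
    "v/2 - w1 \<notin> \<int>\<^sub>\<le>\<^sub>0" "v/2 + w1 \<notin> \<int>\<^sub>\<le>\<^sub>0" "v/2 - w2 \<notin> \<int>\<^sub>\<le>\<^sub>0" "v/2 + w2 \<notin> \<int>\<^sub>\<le>\<^sub>0"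
  shows "Lf w1 w2 v = Rf w1 w2 v"
proof -
  define U where "U = {v. Re v < 3} \<inter> (\<lambda>v. cos (v * of_real pi / 2)) -` (- {0})
     \<inter> (\<lambda>v. v/2 - w1) -` (- \<int>\<^sub>\<le>\<^sub>0) \<inter> (\<lambda>v. v/2 + w1) -` (- \<int>\<^sub>\<le>\<^sub>0)
     \<inter> (\<lambda>v. v/2 - w2) -` (- \<int>\<^sub>\<le>\<^sub>0) \<inter> (\<lambda>v. v/2 + w2) -` (- \<int>\<^sub>\<le>\<^sub>0)"
  define s where "s = {v. Re v < 1} \<inter> (- \<int>)
     \<inter> (\<lambda>v. v/2 - w1) -` (- \<int>) \<inter> (\<lambda>v. v/2 + w1) -` (- \<int>)
     \<inter> (\<lambda>v. v/2 - w2) -` (- \<int>) \<inter> (\<lambda>v. v/2 + w2) -` (- \<int>)"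
  define T where "T = {v. cos (v * of_real pi / 2) = 0 \<or> v/2 - w1 \<in> \<int>\<^sub>\<le>\<^sub>0 \<or> v/2 + w1 \<in> \<int>\<^sub>\<le>\<^sub>0
                        \<or> v/2 - w2 \<in> \<int>\<^sub>\<le>\<^sub>0 \<or> v/2 + w2 \<in> \<int>\<^sub>\<le>\<^sub>0}"
  define C where "C = \<int> \<union> (\<lambda>z. 2 * (z + w1)) ` \<int> \<union> (\<lambda>z. 2 * (z - w1)) ` \<int>
                    \<union> (\<lambda>z. 2 * (z + w2)) ` \<int> \<union> (\<lambda>z. 2 * (z - w2)) ` \<int>"
  have cC: "countable C" unfolding C_def using countable_Ints_complex by auto
  have cos_int: "cos (v * of_real pi / 2) = 0 \<Longrightarrow> v \<in> \<int>" for v :: complex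
    using cos_pi_half_eq0_Ints[of v] by (simp add: mult.commute)
  have inC1: "v \<in> C" if "v/2 - w1 \<in> \<int>" for v
  proof -
    have "v = 2 * ((v/2 - w1) + w1)" by simp
    thus ?thesis using that unfolding C_def by blast
  qed
  have inC2: "v \<in> C" if "v/2 + w1 \<in> \<int>" for v
  proof -
    have "v = 2 * ((v/2 + w1) - w1)" by simp
    thus ?thesis using that unfolding C_def by blast
  qed
  have inC3: "v \<in> C" if "v/2 - w2 \<in> \<int>" for v
  proof -
    have "v = 2 * ((v/2 - w2) + w2)" by simp
    thus ?thesis using that unfolding C_def by blast
  qed
  have inC4: "v \<in> C" if "v/2 + w2 \<in> \<int>" for v
  proof -
    have "v = 2 * ((v/2 + w2) - w2)" by simp
    thus ?thesis using that unfolding C_def by blast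
  qed
  have ZC: "\<int> \<subseteq> C" unfolding C_def by blast
  have TC: "T \<subseteq> C"
  proof
    fix v assume "v \<in> T"
    hence "v \<in> \<int> \<or> v/2 - w1 \<in> \<int> \<or> v/2 + w1 \<in> \<int> \<or> v/2 - w2 \<in> \<int> \<or> v/2 + w2 \<in> \<int>"
      unfolding T_def using cos_int nonpos_Ints_subset_Ints by blast
    thus "v \<in> C" using ZC inC1 inC2 inC3 inC4 by blast
  qed
  have UST: "U = {v. Re v < 3} - T" unfolding U_def T_def by auto
  have oU: "open U" unfolding U_def
    by (intro open_Int continuous_open_vimage open_halfspace_Re_lt) (auto intro!: continuous_intros)
  have cU: "connected U" unfolding UST
    by (intro connected_open_diff_countable countable_subset[OF TC cC] convex_connected
              convex_halfspace_Re_lt open_halfspace_Re_lt) auto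
  have os: "open s" unfolding s_def
    by (intro open_Int continuous_open_vimage open_halfspace_Re_lt) (auto intro!: continuous_intros)
  have sU: "s \<subseteq> U" unfolding s_def U_def using cos_int notInts_nonpos by auto
  have sne: "s \<noteq> {}"
  proof
    assume "s = {}"
    have "ball (-10 :: complex) 1 \<subseteq> C"
    proof
      fix v :: complex assume v: "v \<in> ball (-10) 1"
      have "Re v - Re (-10) \<le> norm (v - (-10))" using complex_Re_le_cmod[of "v - (-10)"] by simp
      moreover have "norm (v - (-10)) < 1" using v by (simp add: dist_norm norm_minus_commute)
      ultimately have "Re v < 1" by simp
      moreover have "v \<notin> s" using \<open>s = {}\<close> by simp
      ultimately have "v \<in> \<int> \<or> v/2 - w1 \<in> \<int> \<or> v/2 + w1 \<in> \<int> \<or> v/2 - w2 \<in> \<int> \<or> v/2 + w2 \<in> \<int>"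
        unfolding s_def by auto
      thus "v \<in> C" using ZC inC1 inC2 inC3 inC4 by blast
    qed
    hence "countable (ball (-10 :: complex) 1)" using cC countable_subset by blast
    thus False using uncountable_ball[of 1 "-10 :: complex"] by simp
  qed
  have hL: "Lf w1 w2 holomorphic_on U"
    by (rule Lf_holo[OF oU]) (auto simp: U_def)
  have hR: "Rf w1 w2 holomorphic_on U"
    unfolding Rf_def[abs_def] by (intro holomorphic_intros) (auto simp: U_def)
  have vU: "v \<in> U" unfolding U_def using assms by auto
  show ?thesis
  proof (rule analytic_continuation_open[OF os oU sne cU sU hL hR _ vU])
    fix z assume "z \<in> s"
    thus "Lf w1 w2 z = Rf w1 w2 z" unfolding s_def by (intro small_eq) auto
  qed
qed



lemma ht_expand: "hyp_term [x1, x2, x3, x4, x5, x6] [y1, y2, y3, y4, y5] 1 n =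
   pochhammer x1 n * (pochhammer x2 n * (pochhammer x3 n * (pochhammer x4 n * (pochhammer x5 n * pochhammer x6 n)))) /
   (pochhammer y1 n * (pochhammer y2 n * (pochhammer y3 n * (pochhammer y4 n * pochhammer y5 n)))) / fact n"
  by (simp add: hyp_term_def)

lemma poch1: "(x::complex) \<notin> \<int>\<^sub>\<le>\<^sub>0 \<Longrightarrow> pochhammer (1 + x) n = pochhammer x n * (x + of_nat n) / x"
proof -
  assume x: "x \<notin> \<int>\<^sub>\<le>\<^sub>0"
  hence x0: "x \<noteq> 0" by auto
  have "x * pochhammer (x + 1) n = pochhammer x n * (x + of_nat n)"
    by (metis pochhammer_Suc pochhammer_rec)
  thus ?thesis using x0 by (simp add: field_simps add.commute)
qed

lemma tm_summable:
  assumes "Re v < 3"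
  shows "summable (\<lambda>n. cn v n * qq w1 w2 v n)"
proof -
  define \<rho> where "\<rho> = max 1 (Re v)"
  define R where "R = norm (v - 1)"
  define V where "V = norm v"
  define W where "W = norm w1 + norm w2"
  define K where "K = exp (R^2 + \<rho> - 1) * (48 * norm (w2^2 - w1^2))"
  have \<rho>3: "\<rho> < 3" unfolding \<rho>_def using assms by auto
  have ev: "eventually (\<lambda>n. norm (cn v n * qq w1 w2 v n) \<le> K * real n powr (\<rho> - 4)) sequentially"
    using eventually_ge_at_top[of "nat \<lceil>V + 2 * W + 1\<rceil>"]
  proof eventually_elim
    case (elim n)
    have "V + 2 * W + 1 \<le> real (nat \<lceil>V + 2 * W + 1\<rceil>)" by (rule real_nat_ceiling_ge)
    also have "\<dots> \<le> real n" using elim by simp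
    finally have n: "V + 2 * W + 1 \<le> real n" .
    show ?case unfolding K_def
      by (rule tm_bound[where \<rho>=\<rho> and R=R and V=V and W=W]) (use n in \<open>auto simp: \<rho>_def R_def V_def W_def\<close>)
  qed
  have sM: "summable (\<lambda>n. K * real n powr (\<rho> - 4))"
    using \<rho>3 by (intro summable_mult) (simp add: summable_real_powr_iff)
  show ?thesis by (rule summable_comparison_test_ev[OF ev sM])
qed

lemma alg1:
  fixes pv ph p3 p5 p4 p6 h s3 s5 s4 s6 f t A3 A5 A4 A6 :: complex
  assumes "ph \<noteq> 0" "p3 \<noteq> 0" "p5 \<noteq> 0" "p4 \<noteq> 0" "p6 \<noteq> 0" "h \<noteq> 0" "s3 \<noteq> 0" "s5 \<noteq> 0" "s4 \<noteq> 0" "s6 \<noteq> 0"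
    "f \<noteq> 0" "A3 \<noteq> 0" "A5 \<noteq> 0" "A4 \<noteq> 0" "A6 \<noteq> 0"
  shows "pv * (ph * t / h * (p3 * (p5 * (p4 * p6)))) /
     (ph * (p3 * A3 / s3 * (p5 * A5 / s5 * (p4 * A4 / s4 * (p6 * A6 / s6))))) / f
   = pv / f * (t / h) * (s3 * s5 * s4 * s6 / (A3 * A5 * A4 * A6))"
  using assms by (simp add: field_simps)

lemma alg2:
  fixes pv f t v D s3 s5 s4 s6 A3 A5 A4 A6 :: complex
  assumes "v \<noteq> 0" "D \<noteq> 0" "A3 \<noteq> 0" "A5 \<noteq> 0" "A4 \<noteq> 0" "A6 \<noteq> 0" "f \<noteq> 0"
  shows "pv / f * (t / (v / 2)) * (s3 * s5 * s4 * s6 / (A3 * A5 * A4 * A6))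
       = s3 * s4 * s5 * s6 / (v * D) * (pv / f * (2 * t * D / ((A4 * A6) * (A3 * A5))))"
  using assms by (simp add: field_simps)

lemma main_gen:
  fixes v w1 w2 s3 s4 s5 s6 :: complex
  assumes e3: "s3 = v/2 - w1" and e5: "s5 = v/2 + w1" and e4: "s4 = v/2 - w2" and e6: "s6 = v/2 + w2"
    and n3: "s3 \<notin> \<int>\<^sub>\<le>\<^sub>0" and n5: "s5 \<notin> \<int>\<^sub>\<le>\<^sub>0" and n4: "s4 \<notin> \<int>\<^sub>\<le>\<^sub>0" and n6: "s6 \<notin> \<int>\<^sub>\<le>\<^sub>0"
    and nh: "v/2 \<notin> \<int>\<^sub>\<le>\<^sub>0" and D: "w2^2 - w1^2 \<noteq> 0" and re: "Re v < 3"
    and cs: "cos (v * of_real pi / 2) \<noteq> 0"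
  shows "summable (hyp_term [v, 1 + v/2, s3, s5, s4, s6] [v/2, 1 + s3, 1 + s5, 1 + s4, 1 + s6] 1) \<and>
         hypergeom [v, 1 + v/2, s3, s5, s4, s6] [v/2, 1 + s3, 1 + s5, 1 + s4, 1 + s6] 1
           = s3 * s4 * s5 * s6 / (v * (w2^2 - w1^2)) * Rf w1 w2 v"
proof -
  define K where "K = s3 * s4 * s5 * s6 / (v * (w2^2 - w1^2))"
  have v0: "v \<noteq> 0" using nh by auto
  have h0: "v / 2 \<noteq> 0" using nh by auto
  have eq: "hyp_term [v, 1 + v/2, s3, s5, s4, s6] [v/2, 1 + s3, 1 + s5, 1 + s4, 1 + s6] 1 n
        = K * (cn v n * qq w1 w2 v n)" for n
  proof -
    define N where "N = (of_nat n :: complex)"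
    have A3: "s3 + N \<noteq> 0" unfolding N_def by (rule nonpos_plus_nat_ne0[OF n3])
    have A5: "s5 + N \<noteq> 0" unfolding N_def by (rule nonpos_plus_nat_ne0[OF n5])
    have A4: "s4 + N \<noteq> 0" unfolding N_def by (rule nonpos_plus_nat_ne0[OF n4])
    have A6: "s6 + N \<noteq> 0" unfolding N_def by (rule nonpos_plus_nat_ne0[OF n6])
    have "hyp_term [v, 1 + v/2, s3, s5, s4, s6] [v/2, 1 + s3, 1 + s5, 1 + s4, 1 + s6] 1 n
        = pochhammer v n / fact n * ((v/2 + N) / (v/2)) * (s3 * s5 * s4 * s6 / ((s3 + N) * (s5 + N) * (s4 + N) * (s6 + N)))"
      unfolding ht_expand poch1[OF nh] poch1[OF n3] poch1[OF n5] poch1[OF n4] poch1[OF n6] N_def[symmetric]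
      by (rule alg1) (use poch_ne0[OF nh] poch_ne0[OF n3] poch_ne0[OF n5] poch_ne0[OF n4] poch_ne0[OF n6]
          h0 n3 n5 n4 n6 A3 A5 A4 A6 in auto)
    also have "\<dots> = K * (pochhammer v n / fact n * (2 * (v/2 + N) * (w2^2 - w1^2) / (((s4 + N) * (s6 + N)) * ((s3 + N) * (s5 + N)))))"
      unfolding K_def by (rule alg2) (use v0 D A3 A5 A4 A6 in auto)
    also have "2 * (v/2 + N) * (w2^2 - w1^2) / (((s4 + N) * (s6 + N)) * ((s3 + N) * (s5 + N))) = qq w1 w2 v n"
    proof -
      have x: "N + v/2 = of_nat n + v/2" unfolding N_def ..
      have "qq w1 w2 v n = 2 * (N + v/2) * (w2^2 - w1^2) / (((N + v/2 - w2) * (N + v/2 + w2)) * ((N + v/2 - w1) * (N + v/2 + w1)))"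
        by (rule qq_alt[OF x]) (use A3 A5 A4 A6 e3 e5 e4 e6 in \<open>simp_all add: algebra_simps\<close>)
      also have "\<dots> = 2 * (v/2 + N) * (w2^2 - w1^2) / (((s4 + N) * (s6 + N)) * ((s3 + N) * (s5 + N)))"
      proof -
        have r1: "N + v/2 - w2 = s4 + N" using e4 by (simp add: algebra_simps)
        have r2: "N + v/2 + w2 = s6 + N" using e6 by (simp add: algebra_simps)
        have r3: "N + v/2 - w1 = s3 + N" using e3 by (simp add: algebra_simps)
        have r4: "N + v/2 + w1 = s5 + N" using e5 by (simp add: algebra_simps)
        have r5: "N + v/2 = v/2 + N" by (simp add: algebra_simps)
        show ?thesis unfolding r1 r2 r3 r4 unfolding r5 ..
      qed
      finally show ?thesis ..
    qed
    finally show ?thesis unfolding cn_def .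
  qed
  have ext_eq: "hyp_term [v, 1 + v/2, s3, s5, s4, s6] [v/2, 1 + s3, 1 + s5, 1 + s4, 1 + s6] 1
        = (\<lambda>n. K * (cn v n * qq w1 w2 v n))" using eq by (intro ext)
  have sm: "summable (\<lambda>n. cn v n * qq w1 w2 v n)" by (rule tm_summable[OF re])
  have "hypergeom [v, 1 + v/2, s3, s5, s4, s6] [v/2, 1 + s3, 1 + s5, 1 + s4, 1 + s6] 1 = K * Lf w1 w2 v"
    unfolding hypergeom_def ext_eq Lf_def by (rule suminf_mult[OF sm])
  also have "Lf w1 w2 v = Rf w1 w2 v"
    by (rule Lf_eq_Rf[OF re cs]) (use n3 n5 n4 n6 e3 e5 e4 e6 in auto)
  finally show ?thesis unfolding ext_eq K_def using summable_mult[OF sm] by auto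
qed



lemma Re_pos_mult_nonpos:
  assumes "Re (c * s) > 0" "Re c > 0"
  shows "(s::complex) \<notin> \<int>\<^sub>\<le>\<^sub>0"
proof
  assume "s \<in> \<int>\<^sub>\<le>\<^sub>0"
  then obtain m :: nat where "s = - of_nat m" by (auto elim: nonpos_Ints_cases')
  hence "Re (c * s) = - real m * Re c" by simp
  also have "\<dots> \<le> 0" using assms(2) by simp
  finally show False using assms(1) by simp
qed

lemma final_alg:
  fixes c a b v s3 s4 s5 s6 G3 G4 G5 G6 C1 C2 k g :: complex
  assumes "c \<noteq> 0" "a \<noteq> 0" "b \<noteq> 0" "v \<noteq> 0"
  shows "s3 * s4 * s5 * s6 / (v * (- (a * b) / c^2)) * ((G4 * G6 * C2 - G3 * G5 * C1) * inverse g / k)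
       = ((2 * c * s3) * (2 * c * s5) * (2 * c * s4) * (2 * c * s6)) / (16 * v * a * b * c^2 * g) * (G5 * G3 * C1 / k - G6 * G4 * C2 / k)"
proof (cases "k = 0 \<or> g = 0")
  case True thus ?thesis by auto
next
  case False
  thus ?thesis using assms by (simp add: field_simps power2_eq_square)
qed


theorem mainTheorem2:
  fixes v a b c :: complex
  assumes "a \<noteq> 0" "b \<noteq> 0" "v \<noteq> 1" "Re v < 3" "Re c > 0"
    and "Re (v * c + a + b) > 0" "Re (v * c + a - b) > 0"
    and "Re (v * c - a + b) > 0" "Re (v * c - a - b) > 0"
    and "v / 2 \<notin> \<int>\<^sub>\<le>\<^sub>0"
    and "1 + (v/2 - a/(2*c) - b/(2*c)) \<notin> \<int>\<^sub>\<le>\<^sub>0"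
    and "1 + (v/2 - a/(2*c) + b/(2*c)) \<notin> \<int>\<^sub>\<le>\<^sub>0"
    and "1 + (v/2 + a/(2*c) + b/(2*c)) \<notin> \<int>\<^sub>\<le>\<^sub>0"
    and "1 + (v/2 + a/(2*c) - b/(2*c)) \<notin> \<int>\<^sub>\<le>\<^sub>0"
  shows "let s3 = v/2 - a/(2*c) - b/(2*c);
             s4 = v/2 - a/(2*c) + b/(2*c);
             s5 = v/2 + a/(2*c) + b/(2*c);
             s6 = v/2 + a/(2*c) - b/(2*c);
             P = (v * c - a - b) * (v * c + a + b) * (v * c - a + b) * (v * c + a - b);
             as = [v, 1 + v/2, s3, s5, s4, s6];
             bs = [v/2, 1 + s3, 1 + s5, 1 + s4, 1 + s6]
         in summable (hyp_term as bs 1) \<and>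
            hypergeom as bs 1 =
              P / (16 * v * a * b * c^2 * Gamma v) *
              (Gamma s5 * Gamma s3 * cos ((a + b) * of_real pi / (2*c)) / cos (v * of_real pi / 2)
               - Gamma s6 * Gamma s4 * cos ((a - b) * of_real pi / (2*c)) / cos (v * of_real pi / 2))"
  proof -
  define s3 where "s3 = v/2 - a/(2*c) - b/(2*c)"
  define s4 where "s4 = v/2 - a/(2*c) + b/(2*c)"
  define s5 where "s5 = v/2 + a/(2*c) + b/(2*c)"
  define s6 where "s6 = v/2 + a/(2*c) - b/(2*c)"
  define w1 where "w1 = a/(2*c) + b/(2*c)"
  define w2 where "w2 = a/(2*c) - b/(2*c)"
  have c0: "c \<noteq> 0" using assms(5) by auto
  have v0: "v \<noteq> 0" using assms(10) by auto
  have e3: "s3 = v/2 - w1" unfolding s3_def w1_def by (simp add: algebra_simps)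
  have e5: "s5 = v/2 + w1" unfolding s5_def w1_def by (simp add: algebra_simps)
  have e4: "s4 = v/2 - w2" unfolding s4_def w2_def by (simp add: algebra_simps)
  have e6: "s6 = v/2 + w2" unfolding s6_def w2_def by (simp add: algebra_simps)
  have c3: "v * c - a - b = 2 * c * s3" unfolding s3_def using c0 by (simp add: field_simps)
  have c5: "v * c + a + b = 2 * c * s5" unfolding s5_def using c0 by (simp add: field_simps)
  have c4: "v * c - a + b = 2 * c * s4" unfolding s4_def using c0 by (simp add: field_simps)
  have c6: "v * c + a - b = 2 * c * s6" unfolding s6_def using c0 by (simp add: field_simps)
  have n3: "s3 \<notin> \<int>\<^sub>\<le>\<^sub>0"
    by (rule Re_pos_mult_nonpos[OF _ assms(5)]) (use assms(9) c3 in \<open>simp add: mult.assoc\<close>)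
  have n5: "s5 \<notin> \<int>\<^sub>\<le>\<^sub>0"
    by (rule Re_pos_mult_nonpos[OF _ assms(5)]) (use assms(6) c5 in \<open>simp add: mult.assoc\<close>)
  have n4: "s4 \<notin> \<int>\<^sub>\<le>\<^sub>0"
    by (rule Re_pos_mult_nonpos[OF _ assms(5)]) (use assms(8) c4 in \<open>simp add: mult.assoc\<close>)
  have n6: "s6 \<notin> \<int>\<^sub>\<le>\<^sub>0"
    by (rule Re_pos_mult_nonpos[OF _ assms(5)]) (use assms(7) c6 in \<open>simp add: mult.assoc\<close>)
  have Deq: "w2^2 - w1^2 = - (a * b) / c^2"
    unfolding w1_def w2_def using c0 by (simp add: field_simps power2_eq_square)
  have D: "w2^2 - w1^2 \<noteq> 0" unfolding Deq using assms(1,2) c0 by simp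
  have cs: "cos (v * of_real pi / 2) \<noteq> 0"
  proof
    assume "cos (v * of_real pi / 2) = 0"
    then obtain n :: int where n: "v * of_real pi / 2 = of_real (of_int n * pi) + of_real pi / 2"
      by (auto simp: cos_eq_0)
    hence "(v - of_int (2 * n + 1)) * of_real pi = 0" by (simp add: algebra_simps)
    hence vn: "v = of_int (2 * n + 1)" by simp
    have "Re (v * c) > 0" using assms(6) assms(9) by simp
    hence "real_of_int (2 * n + 1) * Re c > 0" unfolding vn by simp
    hence "real_of_int (2 * n + 1) > 0" using assms(5) by (simp add: zero_less_mult_iff)
    moreover have "real_of_int (2 * n + 1) < 3" using assms(4) unfolding vn by simp
    ultimately have "n = 0" by linarith
    thus False using vn assms(3) by simp
  qed
  have MG: "summable (hyp_term [v, 1 + v/2, s3, s5, s4, s6] [v/2, 1 + s3, 1 + s5, 1 + s4, 1 + s6] 1) \<and>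
         hypergeom [v, 1 + v/2, s3, s5, s4, s6] [v/2, 1 + s3, 1 + s5, 1 + s4, 1 + s6] 1
           = s3 * s4 * s5 * s6 / (v * (w2^2 - w1^2)) * Rf w1 w2 v"
    by (rule main_gen[OF e3 e5 e4 e6 n3 n5 n4 n6 assms(10) D assms(4) cs])
  have cw1: "w1 * of_real pi = (a + b) * of_real pi / (2*c)" unfolding w1_def using c0 by (simp add: field_simps)
  have cw2: "w2 * of_real pi = (a - b) * of_real pi / (2*c)" unfolding w2_def using c0 by (simp add: field_simps)
  have R: "s3 * s4 * s5 * s6 / (v * (w2^2 - w1^2)) * Rf w1 w2 v =
      (v * c - a - b) * (v * c + a + b) * (v * c - a + b) * (v * c + a - b) / (16 * v * a * b * c^2 * Gamma v) *
              (Gamma s5 * Gamma s3 * cos ((a + b) * of_real pi / (2*c)) / cos (v * of_real pi / 2)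
               - Gamma s6 * Gamma s4 * cos ((a - b) * of_real pi / (2*c)) / cos (v * of_real pi / 2))"
  proof -
    have rg: "rGamma v = inverse (Gamma v)" by (simp add: Gamma_def)
    show ?thesis
      unfolding Rf_def e3[symmetric] e5[symmetric] e4[symmetric] e6[symmetric] cw1 cw2 Deq c3 c5 c4 c6 rg
      by (rule final_alg[OF c0 assms(1,2) v0])
  qed
  show ?thesis unfolding Let_def s3_def[symmetric] s4_def[symmetric] s5_def[symmetric] s6_def[symmetric]
    using MG R by simp
qed

end
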